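(* Let $k>0$, $\mu>0$ and define, for a second-rank tensor $\mathbf A$ on $\mathbb{R}^3$ with $\det\mathbf A>0$, $$\rho_{\mathrm R}\psi_{\mathrm{el}}(\mathbf A):=\frac{k}{2}\Big(\ln\sqrt{\det\mathbf A}\Big)^2+\frac{\mu}{2}\Big(\operatorname{tr}\big((\det\mathbf A)^{-1/3}\mathbf A\big)-3\Big).$$ Let $M$ be the set of symmetric positive definite second-rank tensors $\mathbf B$ on $\mathbb{R}^3$ with $\det\mathbf B=1$, and for $\mathbf C^{(1)},\mathbf C^{(2)}\in M$ define $\mathrm{Dist}(\mathbf C^{(1)},\mathbf C^{(2)}):=\sqrt{\rho_{\mathrm R}\psi_{\mathrm{el}}\big(\mathbf C^{(1)}(\mathbf C^{(2)})^{-1}\big)}$. Then: (i) for every second-rank tensor $\mathbf F_0$ with $\det\mathbf F_0=1$ and all $\mathbf C^{(1)},\mathbf C^{(2)}\in M$, $\mathrm{Dist}\big(\mathbf F_0^{-\mathrm T}\mathbf C^{(1)}\mathbf F_0^{-1},\mathbf F_0^{-\mathrm T}\mathbf C^{(2)}\mathbf F_0^{-1}\big)=\mathrm{Dist}(\mathbf C^{(1)},\mathbf C^{(2)})$; (ii) for all $\mathbf C^{(1)},\mathbf C^{(2)}\in M$ one has $\mathrm{Dist}(\mathbf C^{(1)},\mathbf C^{(2)})\ge 0$, and $\mathrm{Dist}(\mathbf C^{(1)},\mathbf C^{(2)})=0$ if and only if $\mathbf C^{(1)}=\mathbf C^{(2)}$.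
   Context: $\mathbf A^{-\mathrm T}$ denotes the inverse of the transpose. $\rho_{\mathrm R}\psi_{\mathrm{el}}$ is the (generalized Neo-Hooke) free energy density written as a single function; $\rho_{\mathrm R}>0$ is a constant mass density. *)

theory Defs
  imports "HOL-Analysis.Analysis"
begin

definition psi_el :: "real \<Rightarrow> real \<Rightarrow> real^3^3 \<Rightarrow> real" where
  "psi_el k \<mu> A = k / 2 * (ln (sqrt (det A)))^2
      + \<mu> / 2 * (trace ((det A) powr (-1/3) *\<^sub>R A) - 3)"

definition M_set :: "(real^3^3) set" where
  "M_set = {B. transpose B = B \<and> (\<forall>x. x \<noteq> 0 \<longrightarrow> x \<bullet> (B *v x) > 0) \<and> det B = 1}"

definition Dist :: "real \<Rightarrow> real \<Rightarrow> real^3^3 \<Rightarrow> real^3^3 \<Rightarrow> real" where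
  "Dist k \<mu> C1 C2 = sqrt (psi_el k \<mu> (C1 ** matrix_inv C2))"

end

theory Submission
  imports Defs
begin

definition m3 :: "real \<Rightarrow> real \<Rightarrow> real \<Rightarrow> real \<Rightarrow> real \<Rightarrow> real \<Rightarrow> real \<Rightarrow> real \<Rightarrow> real \<Rightarrow> real^3^3" where
  "m3 a b c d e f g h i = vector [vector [a,b,c], vector [d,e,f], vector [g,h,i]]"

lemma m3_nth [simp]:
  "m3 a b c d e f g h i $ 1 $ 1 = a" "m3 a b c d e f g h i $ 1 $ 2 = b" "m3 a b c d e f g h i $ 1 $ 3 = c"
  "m3 a b c d e f g h i $ 2 $ 1 = d" "m3 a b c d e f g h i $ 2 $ 2 = e" "m3 a b c d e f g h i $ 2 $ 3 = f"
  "m3 a b c d e f g h i $ 3 $ 1 = g" "m3 a b c d e f g h i $ 3 $ 2 = h" "m3 a b c d e f g h i $ 3 $ 3 = i"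
  by (simp_all add: m3_def)

lemmas msimps = vec_eq_iff forall_3 matrix_matrix_mult_def sum_3 transpose_def mat_def

definition Lm :: "real \<Rightarrow> real \<Rightarrow> real \<Rightarrow> real^3^3" where
  "Lm a b c = m3 1 0 0 a 1 0 b c 1"
definition Nm :: "real \<Rightarrow> real \<Rightarrow> real \<Rightarrow> real^3^3" where
  "Nm a b c = m3 1 0 0 (-a) 1 0 (a*c - b) (-c) 1"
definition Dm :: "real \<Rightarrow> real \<Rightarrow> real \<Rightarrow> real^3^3" where
  "Dm x y z = m3 x 0 0 0 y 0 0 0 z"
definition LDL :: "real \<Rightarrow> real \<Rightarrow> real \<Rightarrow> real \<Rightarrow> real \<Rightarrow> real \<Rightarrow> real^3^3" where
  "LDL a b c d1 d2 d3 = m3 d1 (d1*a) (d1*b) (d1*a) (a^2*d1 + d2) (a*b*d1 + c*d2) (d1*b) (a*b*d1 + c*d2) (b^2*d1 + c^2*d2 + d3)"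

lemma LDL_prod: "LDL a b c d1 d2 d3 = Lm a b c ** Dm d1 d2 d3 ** transpose (Lm a b c)"
  by (simp add: msimps LDL_def Lm_def Dm_def power2_eq_square algebra_simps)

lemma NL: "Nm a b c ** Lm a b c = mat 1" "Lm a b c ** Nm a b c = mat 1"
  by (simp_all add: msimps Lm_def Nm_def algebra_simps)

lemma DD: "d1 \<noteq> 0 \<Longrightarrow> d2 \<noteq> 0 \<Longrightarrow> d3 \<noteq> 0 \<Longrightarrow> Dm d1 d2 d3 ** Dm (1/d1) (1/d2) (1/d3) = mat 1 \<and> Dm (1/d1) (1/d2) (1/d3) ** Dm d1 d2 d3 = mat 1"
  by (simp add: msimps Dm_def)

lemma det_LDL: "det (LDL a b c d1 d2 d3) = d1*d2*d3"
  by (simp add: det_3 LDL_def power2_eq_square algebra_simps)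

lemma det_Nm: "det (Nm a b c) = 1" by (simp add: det_3 Nm_def)

lemma trace_diag: "trace (A ** Dm x y z) = A$1$1*x + A$2$2*y + A$3$3*z"
  by (simp add: trace_def sum_3 matrix_matrix_mult_def Dm_def)

lemma M_setD: assumes "X \<in> M_set"
  shows "transpose X = X" "\<And>x. x \<noteq> 0 \<Longrightarrow> x \<bullet> (X *v x) > 0" "det X = 1"
  using assms by (auto simp: M_set_def)

lemma quad3: "(x::real^3) \<bullet> (X *v x) = x$1*(X$1$1*x$1 + X$1$2*x$2 + X$1$3*x$3) + x$2*(X$2$1*x$1 + X$2$2*x$2 + X$2$3*x$3) + x$3*(X$3$1*x$1 + X$3$2*x$2 + X$3$3*x$3)"
  unfolding inner_vec_def matrix_vector_mult_def sum_3 inner_real_def by simp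

lemma ldl_exists:
  assumes "X \<in> M_set"
  shows "\<exists>a b c d1 d2 d3. d1 > 0 \<and> d2 > 0 \<and> d3 > 0 \<and> X = LDL a b c d1 d2 d3"
proof -
  note sy = M_setD(1)[OF assms] and pd = M_setD(2)[OF assms] and dt = M_setD(3)[OF assms]
  have tij: "X$j$i = X$i$j" for i j
  proof -
    have "transpose X $ i $ j = X$i$j" using sy by simp
    thus ?thesis by (simp add: transpose_def)
  qed
  have s12: "X$2$1 = X$1$2" "X$3$1 = X$1$3" "X$3$2 = X$2$3" using tij by auto
  have "vector [1,0,0] \<noteq> (0::real^3)" by (metis vector_3(1) zero_index zero_neq_one)
  from pd[OF this] have d1p: "X$1$1 > 0" by (simp add: quad3)
  define d1 where "d1 = X$1$1"
  define a where "a = X$1$2 / d1"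
  define b where "b = X$1$3 / d1"
  define d2 where "d2 = X$2$2 - X$1$2^2/d1"
  have "vector [-X$1$2, X$1$1, 0] \<noteq> (0::real^3)" using d1p by (metis vector_3(2) zero_index less_irrefl)
  from pd[OF this] have "0 < X$1$1 * (X$1$1*X$2$2 - X$1$2^2)"
    by (simp add: quad3 s12 power2_eq_square algebra_simps)
  hence "X$1$1*X$2$2 - X$1$2^2 > 0" using d1p by (simp add: zero_less_mult_iff)
  hence d2p: "d2 > 0" unfolding d2_def d1_def using d1p by (simp add: field_simps)
  define c where "c = (X$2$3 - a*b*d1)/d2"
  define d3 where "d3 = X$3$3 - b^2*d1 - c^2*d2"
  have eq: "X = LDL a b c d1 d2 d3"
    using d1p d2p unfolding vec_eq_iff forall_3 LDL_def
    by (simp add: s12 a_def b_def c_def d3_def d1_def d2_def field_simps power2_eq_square)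
  have "d1*d2*d3 = 1" using dt unfolding eq det_LDL .
  hence "d3 > 0" using d1p d2p unfolding d1_def by (metis mult_pos_pos zero_less_mult_pos zero_less_one)
  thus ?thesis using eq d1p d2p unfolding d1_def by blast
qed


lemma amgm3: fixes x y z :: real assumes "x>0" "y>0" "z>0" "x*y*z = 1"
  shows "x+y+z \<ge> 3 \<and> (x+y+z = 3 \<longrightarrow> x = 1 \<and> y = 1 \<and> z = 1)"
proof -
  define s where "s = x+y+z"
  have id0: "2*(s^3 - 27*(x*y*z)) = (x+y+z)*((x-y)^2+(y-z)^2+(z-x)^2) + 6*(x*(y-z)^2 + y*(z-x)^2 + z*(x-y)^2)"
    unfolding s_def by (simp add: power2_eq_square power3_eq_cube algebra_simps)
  hence id: "s^3 - 27*(x*y*z) = (x+y+z)/2*((x-y)^2+(y-z)^2+(z-x)^2) + 3*(x*(y-z)^2 + y*(z-x)^2 + z*(x-y)^2)"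
    by simp
  have nn: "(x+y+z)/2*((x-y)^2+(y-z)^2+(z-x)^2) \<ge> 0" "x*(y-z)^2 + y*(z-x)^2 + z*(x-y)^2 \<ge> 0"
    using assms by (auto intro!: add_nonneg_nonneg mult_nonneg_nonneg)
  have "s^3 - 27*(x*y*z) \<ge> 0" unfolding id using nn by simp
  hence "s^3 \<ge> 27" using assms(4) by simp
  hence s3: "s \<ge> 3"
    using power_le_imp_le_base[of 3 2 s] assms unfolding s_def by simp
  moreover have "s = 3 \<longrightarrow> x = 1 \<and> y = 1 \<and> z = 1"
  proof
    assume "s = 3"
    hence "s^3 = 27" by simp
    hence "s^3 - 27*(x*y*z) = 0" using assms(4) by simp
    hence z0: "(x+y+z)/2*((x-y)^2+(y-z)^2+(z-x)^2) + 3*(x*(y-z)^2 + y*(z-x)^2 + z*(x-y)^2) = 0" unfolding id .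
    have aux: "a = 0" if "a + 3*b = 0" "0 \<le> a" "0 \<le> b" for a b :: real using that by linarith
    have z1: "(x+y+z)/2*((x-y)^2+(y-z)^2+(z-x)^2) = 0" by (rule aux[OF z0 nn])
    have "(x-y)^2+(y-z)^2+(z-x)^2 = 0" using z1 assms by simp
    hence "x = y" "y = z" by (smt (verit) power2_less_eq_zero_iff zero_le_power2)+
    with `s = 3` show "x = 1 \<and> y = 1 \<and> z = 1" unfolding s_def by simp
  qed
  ultimately show ?thesis unfolding s_def by simp
qed

lemma minv: fixes A :: "real^'n^'n" assumes "det A \<noteq> 0"
  shows "A ** matrix_inv A = mat 1" "matrix_inv A ** A = mat 1"
proof -
  have "invertible A" using assms invertible_det_nz by blast
  hence "\<exists>A'. A ** A' = mat 1 \<and> A' ** A = mat 1" unfolding invertible_def .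
  hence "A ** matrix_inv A = mat 1 \<and> matrix_inv A ** A = mat 1"
    unfolding matrix_inv_def by (rule someI_ex)
  thus "A ** matrix_inv A = mat 1" "matrix_inv A ** A = mat 1" by auto
qed

lemma minv_unique: fixes A X :: "real^'n^'n" assumes "A ** X = mat 1" "X ** A = mat 1"
  shows "matrix_inv A = X"
proof -
  have "det A * det X = 1" using assms(1) by (metis det_I det_mul)
  hence "det A \<noteq> 0" by auto
  note m = minv[OF this]
  have "matrix_inv A = (X ** A) ** matrix_inv A" using assms(2) by simp
  also have "\<dots> = X ** (A ** matrix_inv A)" by (simp add: matrix_mul_assoc)
  also have "\<dots> = X" using m by simp
  finally show ?thesis .
qed

lemma det_minv: fixes A :: "real^'n^'n" assumes "det A \<noteq> 0" shows "det (matrix_inv A) = 1 / det A"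
proof -
  have "det A * det (matrix_inv A) = 1" using minv(1)[OF assms] by (metis det_I det_mul)
  thus ?thesis using assms by (simp add: field_simps)
qed

lemma trace_scaleR: "trace (c *\<^sub>R (A::real^'n^'n)) = c * trace A"
  by (simp add: trace_def sum_distrib_left)

lemma psi_det1: "det A = 1 \<Longrightarrow> psi_el k \<mu> A = \<mu>/2 * (trace A - 3)"
  by (simp add: psi_el_def trace_scaleR)

lemma dot_transp: "(x::real^'n) \<bullet> (M *v y) = (transpose M *v x) \<bullet> y"
  by (simp add: dot_lmul_matrix)

lemma key:
  assumes A: "A \<in> M_set" and B: "B \<in> M_set"
  shows "trace (A ** matrix_inv B) \<ge> 3 \<and> (trace (A ** matrix_inv B) = 3 \<longrightarrow> A = B)"
proof -
  obtain a b c d1 d2 d3 where dp: "d1 > 0" "d2 > 0" "d3 > 0" and Beq: "B = LDL a b c d1 d2 d3"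
    using ldl_exists[OF B] by blast
  have dprod: "d1*d2*d3 = 1" using M_setD(3)[OF B] unfolding Beq det_LDL .
  define L where "L = Lm a b c"
  define N where "N = Nm a b c"
  define D where "D = Dm d1 d2 d3"
  define Di where "Di = Dm (1/d1) (1/d2) (1/d3)"
  have NL1: "N ** L = mat 1" and LN1: "L ** N = mat 1" unfolding N_def L_def using NL by auto
  have DD1: "D ** Di = mat 1" "Di ** D = mat 1" unfolding D_def Di_def using DD dp by auto
  have LtNt: "transpose N ** transpose L = mat 1" "transpose L ** transpose N = mat 1"
    using NL1 LN1 by (metis matrix_transpose_mul transpose_mat)+
  have Bf: "B = L ** D ** transpose L" unfolding Beq L_def D_def by (rule LDL_prod)
  define Bi where "Bi = transpose N ** Di ** N"
  have "B ** Bi = mat 1"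
  proof -
    have "B ** Bi = L ** D ** (transpose L ** transpose N) ** Di ** N"
      unfolding Bf Bi_def by (simp add: matrix_mul_assoc)
    also have "\<dots> = L ** (D ** Di) ** N" using LtNt by (simp add: matrix_mul_assoc)
    also have "\<dots> = mat 1" using DD1 LN1 by simp
    finally show ?thesis .
  qed
  moreover have "Bi ** B = mat 1"
  proof -
    have "Bi ** B = transpose N ** Di ** (N ** L) ** D ** transpose L"
      unfolding Bf Bi_def by (simp add: matrix_mul_assoc)
    also have "\<dots> = transpose N ** (Di ** D) ** transpose L" using NL1 by (simp add: matrix_mul_assoc)
    also have "\<dots> = mat 1" using DD1 LtNt by simp
    finally show ?thesis .
  qed
  ultimately have Binv: "matrix_inv B = Bi" by (rule minv_unique)
  define A' where "A' = N ** A ** transpose N"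
  have tr: "trace (A ** matrix_inv B) = trace (A' ** Di)"
  proof -
    have "trace (A ** matrix_inv B) = trace ((A ** transpose N ** Di) ** N)"
      unfolding Binv Bi_def by (simp add: matrix_mul_assoc)
    also have "\<dots> = trace (N ** (A ** transpose N ** Di))" by (rule trace_mul_sym)
    also have "\<dots> = trace (A' ** Di)" unfolding A'_def by (simp add: matrix_mul_assoc)
    finally show ?thesis .
  qed
  have A'M: "A' \<in> M_set"
  proof -
    have "transpose A' = A'" unfolding A'_def using M_setD(1)[OF A]
      by (simp add: matrix_transpose_mul matrix_mul_assoc)
    moreover have "x \<bullet> (A' *v x) > 0" if "x \<noteq> 0" for x
    proof -
      have "transpose N *v x \<noteq> 0"
      proof
        assume "transpose N *v x = 0"
        hence "transpose L *v (transpose N *v x) = 0" by simp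
        hence "(transpose L ** transpose N) *v x = 0" by (metis matrix_vector_mul_assoc)
        hence "x = 0" using LtNt(2) by (metis matrix_vector_mul_lid)
        thus False using that by simp
      qed
      from M_setD(2)[OF A this]
      show ?thesis unfolding A'_def
        by (metis dot_transp matrix_vector_mul_assoc)
    qed
    moreover have "det A' = 1" unfolding A'_def N_def
      by (simp add: det_mul det_Nm M_setD(3)[OF A])
    ultimately show ?thesis unfolding M_set_def by blast
  qed
  obtain a' b' c' e1 e2 e3 where ep: "e1 > 0" "e2 > 0" "e3 > 0" and A'eq: "A' = LDL a' b' c' e1 e2 e3"
    using ldl_exists[OF A'M] by blast
  have eprod: "e1*e2*e3 = 1" using M_setD(3)[OF A'M] unfolding A'eq det_LDL .
  have trf: "trace (A ** matrix_inv B) = e1/d1 + (a'^2*e1 + e2)/d2 + (b'^2*e1 + c'^2*e2 + e3)/d3"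
    unfolding tr Di_def trace_diag A'eq LDL_def by simp
  have t1: "(a'^2*e1 + e2)/d2 \<ge> e2/d2" "(b'^2*e1 + c'^2*e2 + e3)/d3 \<ge> e3/d3"
    using ep dp by (auto intro!: divide_right_mono)
  have "(e1/d1)*(e2/d2)*(e3/d3) = 1" using eprod dprod by simp
  note am = amgm3[OF _ _ _ this] 
  have am': "e1/d1 + e2/d2 + e3/d3 \<ge> 3 \<and> (e1/d1 + e2/d2 + e3/d3 = 3 \<longrightarrow> e1/d1 = 1 \<and> e2/d2 = 1 \<and> e3/d3 = 1)"
    using am ep dp by simp
  have ge: "trace (A ** matrix_inv B) \<ge> 3" using am' t1 trf by linarith
  moreover have "A = B" if t3: "trace (A ** matrix_inv B) = 3"
  proof -
    have q1: "(a'^2*e1 + e2)/d2 = e2/d2" "(b'^2*e1 + c'^2*e2 + e3)/d3 = e3/d3" "e1/d1 + e2/d2 + e3/d3 = 3"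
      using am' t1 trf t3 by linarith+
    have ed: "e1 = d1" "e2 = d2" "e3 = d3" using am'[THEN conjunct2, rule_format, OF q1(3)] dp by auto
    have "a'^2*e1 = 0" using q1(1) dp by (simp add: field_simps)
    hence a0: "a' = 0" using ep by simp
    have "b'^2*e1 + c'^2*e2 = 0" using q1(2) dp by (simp add: field_simps)
    moreover have "b'^2*e1 \<ge> 0" "c'^2*e2 \<ge> 0" using ep by auto
    ultimately have "b'^2*e1 = 0" "c'^2*e2 = 0" by linarith+
    hence bc0: "b' = 0" "c' = 0" using ep by auto
    have A'D: "A' = D" unfolding A'eq D_def a0 bc0 ed LDL_def Dm_def by simp
    have "A = (L ** N) ** A ** (transpose N ** transpose L)" using LN1 LtNt by simp
    also have "\<dots> = L ** A' ** transpose L" unfolding A'_def by (simp add: matrix_mul_assoc)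
    also have "\<dots> = B" unfolding A'D Bf ..
    finally show ?thesis .
  qed
  ultimately show ?thesis by blast
qed


lemma psi_cong: "det X = det Y \<Longrightarrow> trace X = trace Y \<Longrightarrow> psi_el k \<mu> X = psi_el k \<mu> Y"
  by (simp add: psi_el_def trace_scaleR)

lemma det_prod1: assumes "C1 \<in> M_set" "C2 \<in> M_set" shows "det (C1 ** matrix_inv C2) = 1"
  using M_setD(3)[OF assms(1)] M_setD(3)[OF assms(2)] by (simp add: det_mul det_minv)

theorem mainTheorem2:
  fixes k \<mu> :: real
  assumes "k > 0" and "\<mu> > 0"
  shows "(\<forall>F0 :: real^3^3. \<forall>C1 \<in> M_set. \<forall>C2 \<in> M_set. det F0 = 1 \<longrightarrow>
            Dist k \<mu> (matrix_inv (transpose F0) ** C1 ** matrix_inv F0)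
                     (matrix_inv (transpose F0) ** C2 ** matrix_inv F0)
            = Dist k \<mu> C1 C2)
      \<and> (\<forall>C1 \<in> M_set. \<forall>C2 \<in> M_set.
            Dist k \<mu> C1 C2 \<ge> 0 \<and> (Dist k \<mu> C1 C2 = 0 \<longleftrightarrow> C1 = C2))"
proof (intro conjI ballI allI impI)
  fix F0 :: "real^3^3" and C1 C2 assume C1: "C1 \<in> M_set" and C2: "C2 \<in> M_set" and F: "det F0 = 1"
  define G where "G = matrix_inv (transpose F0)"
  define H where "H = matrix_inv F0"
  have dG: "det G \<noteq> 0" unfolding G_def using F by (simp add: det_minv)
  have dH: "det H \<noteq> 0" unfolding H_def using F by (simp add: det_minv)
  have dC2: "det C2 \<noteq> 0" using M_setD(3)[OF C2] by simp
  note mG = minv[OF dG] and mH = minv[OF dH] and mC = minv[OF dC2]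
  define P where "P = matrix_inv H ** matrix_inv C2 ** matrix_inv G"
  have "(G ** C2 ** H) ** P = mat 1"
  proof -
    have "(G ** C2 ** H) ** P = G ** C2 ** (H ** matrix_inv H) ** matrix_inv C2 ** matrix_inv G"
      unfolding P_def by (simp add: matrix_mul_assoc)
    also have "\<dots> = G ** (C2 ** matrix_inv C2) ** matrix_inv G" using mH by (simp add: matrix_mul_assoc)
    also have "\<dots> = mat 1" using mC mG by simp
    finally show ?thesis .
  qed
  moreover have "P ** (G ** C2 ** H) = mat 1"
  proof -
    have "P ** (G ** C2 ** H) = matrix_inv H ** matrix_inv C2 ** (matrix_inv G ** G) ** C2 ** H"
      unfolding P_def by (simp add: matrix_mul_assoc)
    also have "\<dots> = matrix_inv H ** (matrix_inv C2 ** C2) ** H" using mG by (simp add: matrix_mul_assoc)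
    also have "\<dots> = mat 1" using mC mH by simp
    finally show ?thesis .
  qed
  ultimately have Pinv: "matrix_inv (G ** C2 ** H) = P" by (rule minv_unique)
  define Q where "Q = C1 ** matrix_inv C2"
  have prod: "(G ** C1 ** H) ** matrix_inv (G ** C2 ** H) = G ** Q ** matrix_inv G"
  proof -
    have "(G ** C1 ** H) ** matrix_inv (G ** C2 ** H) = G ** C1 ** (H ** matrix_inv H) ** matrix_inv C2 ** matrix_inv G"
      unfolding Pinv P_def by (simp add: matrix_mul_assoc)
    also have "\<dots> = G ** Q ** matrix_inv G" using mH unfolding Q_def by (simp add: matrix_mul_assoc)
    finally show ?thesis .
  qed
  have "det (G ** Q ** matrix_inv G) = det Q"
    using dG by (simp add: det_mul det_minv)
  moreover have "trace (G ** Q ** matrix_inv G) = trace Q"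
  proof -
    have "trace (G ** Q ** matrix_inv G) = trace (matrix_inv G ** (G ** Q))" by (rule trace_mul_sym)
    also have "\<dots> = trace Q" using mG by (simp add: matrix_mul_assoc)
    finally show ?thesis .
  qed
  ultimately have "psi_el k \<mu> (G ** Q ** matrix_inv G) = psi_el k \<mu> Q" by (rule psi_cong)
  thus "Dist k \<mu> (matrix_inv (transpose F0) ** C1 ** matrix_inv F0)
                     (matrix_inv (transpose F0) ** C2 ** matrix_inv F0) = Dist k \<mu> C1 C2"
    unfolding Dist_def G_def[symmetric] H_def[symmetric] prod Q_def by simp
next
  fix C1 C2 assume C1: "C1 \<in> M_set" and C2: "C2 \<in> M_set"
  have ps: "psi_el k \<mu> (C1 ** matrix_inv C2) = \<mu>/2 * (trace (C1 ** matrix_inv C2) - 3)"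
    by (rule psi_det1[OF det_prod1[OF C1 C2]])
  note kk = key[OF C1 C2]
  have nn: "psi_el k \<mu> (C1 ** matrix_inv C2) \<ge> 0" unfolding ps using kk assms by simp
  show "Dist k \<mu> C1 C2 \<ge> 0" unfolding Dist_def using nn by simp
  show "Dist k \<mu> C1 C2 = 0 \<longleftrightarrow> C1 = C2"
  proof
    assume "Dist k \<mu> C1 C2 = 0"
    hence "trace (C1 ** matrix_inv C2) = 3" unfolding Dist_def ps using assms by simp
    thus "C1 = C2" using kk by blast
  next
    assume "C1 = C2"
    hence "C1 ** matrix_inv C2 = mat 1" using minv(1)[of C2] M_setD(3)[OF C2] by simp
    thus "Dist k \<mu> C1 C2 = 0" unfolding Dist_def ps by (simp add: trace_I)
  qed
qed

end
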